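(* Let $\mathbf{y}$ be observed data with summary statistic vector $s(\mathbf{y})\in\mathbb{R}^\kappa$, and let $(\theta^i,\mathbf{x}^{i*})$, $i=1,\dots,N$, be parameter samples paired with simulated pseudo-data having summary statistics $s(\mathbf{x}^{i*})\in\mathbb{R}^\kappa$. For a weight vector $\mathbf{w}\in E\subset\mathbb{R}^\kappa$, define the weighted distance $d_{\mathbf{w}}(s(\mathbf{x}),s(\mathbf{y}))=\sum_{i=1}^\kappa w_i^2(s_i(\mathbf{x})-s_i(\mathbf{y}))^2$, and let $Y^{(\mathbf{w})}_{1:n}$ be the parameter samples $\theta^i$ corresponding to the $n=M=\lfloor\alpha N\rfloor$ pseudo-data sets closest to $\mathbf{y}$ under $d_{\mathbf{w}}$. Let $X_{1:n}$ be a fixed sample (from the prior). Then $L(\mathbf{w})=\hat{D}_h(X_{1:n}\|Y^{(\mathbf{w})}_{1:n})$ is piecewise constant with respect to $\mathbf{w}\in E$, with finitely many discontinuities.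
   Context: For samples $X_{1:n},Y_{1:n}$ in $\mathbb{R}^d$ and an integer $k\ge 2$, let $\rho_k(i)$ be the Euclidean distance from $X_i$ to its $k$th nearest neighbour in $X_{1:n}$ (excluding itself) and $\nu_k(i)$ the distance from $X_i$ to its $k$th nearest neighbour in $Y_{1:n}$. The estimator is $\hat D_{\alpha'}(X_{1:n}\|Y_{1:n})=\frac1n\sum_{i=1}^n\left(\frac{(n-1)\rho_k(i)}{n\nu_k(i)}\right)^{1-\alpha'}B_{k,\alpha'}$ with $B_{k,\alpha'}=\frac{\Gamma(k)^2}{\Gamma(k-\alpha'+1)\Gamma(k+\alpha'-1)}$, and $\hat D_h=1-\hat D_{1/2}$. Here $\alpha\in(0,1)$ is the ABC acceptance proportion. *)

theory Defs
  imports "HOL-Analysis.Analysis"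
begin

text \<open>Distance from p to its k-th nearest neighbour among the points of the list Z
  (k >= 1; the k-th smallest of the distances, counted with multiplicity).\<close>
definition kth_nn_dist :: "('a::metric_space) list \<Rightarrow> 'a \<Rightarrow> nat \<Rightarrow> real" where
  "kth_nn_dist Z p k = sort (map (\<lambda>z. dist p z) Z) ! (k - 1)"

definition rho_k :: "(nat \<Rightarrow> 'a::metric_space) \<Rightarrow> nat \<Rightarrow> nat \<Rightarrow> nat \<Rightarrow> real" where
  "rho_k X n k i = kth_nn_dist (map X (filter (\<lambda>j. j \<noteq> i) [0..<n])) (X i) k"

definition nu_k :: "(nat \<Rightarrow> 'a::metric_space) \<Rightarrow> (nat \<Rightarrow> 'a) \<Rightarrow> nat \<Rightarrow> nat \<Rightarrow> nat \<Rightarrow> real" where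
  "nu_k X Y n k i = kth_nn_dist (map Y [0..<n]) (X i) k"

definition B_const :: "nat \<Rightarrow> real \<Rightarrow> real" where
  "B_const k a = Gamma (real k) ^ 2 / (Gamma (real k - a + 1) * Gamma (real k + a - 1))"

definition D_alpha_hat :: "(nat \<Rightarrow> 'a::metric_space) \<Rightarrow> (nat \<Rightarrow> 'a) \<Rightarrow> nat \<Rightarrow> nat \<Rightarrow> real \<Rightarrow> real" where
  "D_alpha_hat X Y n k a =
     (1 / real n) * (\<Sum>i<n. ((real n - 1) * rho_k X n k i / (real n * nu_k X Y n k i)) powr (1 - a)
                            * B_const k a)"

definition D_h_hat :: "(nat \<Rightarrow> 'a::metric_space) \<Rightarrow> (nat \<Rightarrow> 'a) \<Rightarrow> nat \<Rightarrow> nat \<Rightarrow> real" where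
  "D_h_hat X Y n k = 1 - D_alpha_hat X Y n k (1/2)"

definition wdist :: "real^'k \<Rightarrow> real^'k \<Rightarrow> real^'k \<Rightarrow> real" where
  "wdist w a b = (\<Sum>i\<in>UNIV. (w $ i)^2 * (a $ i - b $ i)^2)"

text \<open>Indices (among 0..N-1) of the n pseudo-data sets closest to the observed summary sy under d_w;
  ties broken by index (stable sort).\<close>
definition abc_selected :: "real^'k \<Rightarrow> (nat \<Rightarrow> real^'k) \<Rightarrow> real^'k \<Rightarrow> nat \<Rightarrow> nat \<Rightarrow> nat list" where
  "abc_selected w sx sy N n = take n (sort_key (\<lambda>i. wdist w (sx i) sy) [0..<N])"

definition Y_w :: "real^'k \<Rightarrow> (nat \<Rightarrow> 'a) \<Rightarrow> (nat \<Rightarrow> real^'k) \<Rightarrow> real^'k \<Rightarrow> nat \<Rightarrow> nat \<Rightarrow> nat \<Rightarrow> 'a" where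
  "Y_w w theta sx sy N n j = theta (abc_selected w sx sy N n ! j)"

definition abc_loss :: "(nat \<Rightarrow> 'a::metric_space) \<Rightarrow> (nat \<Rightarrow> 'a) \<Rightarrow> (nat \<Rightarrow> real^'k) \<Rightarrow> real^'k
    \<Rightarrow> nat \<Rightarrow> nat \<Rightarrow> nat \<Rightarrow> real^'k \<Rightarrow> real" where
  "abc_loss X theta sx sy N n k w = D_h_hat X (Y_w w theta sx sy N n) n k"

end

theory Submission
  imports Defs
begin

lemma insort_key_cong:
  assumes "\<forall>y\<in>set xs. (f x \<le> f y) = (g x \<le> g y)"
  shows "insort_key f x xs = insort_key g x xs"
  using assms by (induction xs) auto

lemma sort_key_cong:
  assumes "\<forall>x\<in>set xs. \<forall>y\<in>set xs. (f x \<le> f y) = (g x \<le> g y)"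
  shows "sort_key f xs = sort_key g xs"
  using assms
proof (induction xs)
  case Nil then show ?case by simp
next
  case (Cons a xs)
  then have "sort_key f xs = sort_key g xs" by simp
  moreover have "insort_key f a (sort_key g xs) = insort_key g a (sort_key g xs)"
    using Cons.prems by (intro insort_key_cong) auto
  ultimately show ?case by simp
qed

lemma wdist_diff:
  "wdist w a b - wdist w c b =
     (\<Sum>l\<in>UNIV. (\<chi> l. (a $ l - b $ l)^2 - (c $ l - b $ l)^2) $ l * (w $ l)^2)"
  unfolding wdist_def by (simp add: sum_subtractf[symmetric] algebra_simps)

theorem lemma4:
  fixes X theta :: "nat \<Rightarrow> real^'d"
    and sx :: "nat \<Rightarrow> real^'k" and sy :: "real^'k"
    and E :: "(real^'k) set"
    and N n k :: nat and alpha :: real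
  assumes "0 < alpha" and "alpha < 1"
    and "n = nat \<lfloor>alpha * real N\<rfloor>"
    and "k \<ge> 2"
  shows "finite (abc_loss X theta sx sy N n k ` E) \<and>
    (\<exists>P :: (real^'k) set. finite P \<and> (\<forall>c\<in>P. c \<noteq> 0) \<and>
       (\<forall>w\<in>E. (\<forall>c\<in>P. (\<Sum>i\<in>UNIV. c $ i * (w $ i)^2) \<noteq> 0) \<longrightarrow>
          (\<exists>e>0. \<forall>w'\<in>E. dist w' w < e \<longrightarrow>
              abc_loss X theta sx sy N n k w' = abc_loss X theta sx sy N n k w)))"
proof
  define F where "F = (\<lambda>l::nat list. D_h_hat X (\<lambda>j. theta (l ! j)) n k)"
  have L: "abc_loss X theta sx sy N n k w = F (abc_selected w sx sy N n)" for w
    unfolding F_def abc_loss_def Y_w_def by simp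
  have S: "abc_selected w sx sy N n \<in> {l. set l \<subseteq> {0..<N} \<and> length l \<le> n}" for w
    unfolding abc_selected_def by (auto dest: in_set_takeD)
  have fin: "finite {l. set l \<subseteq> {0..<N} \<and> length l \<le> n}"
    by (rule finite_lists_length_le) simp
  show "finite (abc_loss X theta sx sy N n k ` E)"
    by (rule finite_subset[OF _ finite_imageI[OF fin, of F]]) (use L S in auto)
  define g where "g = (\<lambda>i w. wdist w (sx i) sy)"
  define cv where "cv = (\<lambda>i j. (\<chi> l. (sx i $ l - sy $ l)^2 - (sx j $ l - sy $ l)^2) :: real^'k)"
  have gd: "g i w - g j w = (\<Sum>l\<in>UNIV. cv i j $ l * (w $ l)^2)" for i j w
    unfolding g_def cv_def by (rule wdist_diff)
  define P where "P = (\<lambda>(i,j). cv i j) ` {p \<in> {0..<N} \<times> {0..<N}. cv (fst p) (snd p) \<noteq> 0}"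
  show "\<exists>P :: (real^'k) set. finite P \<and> (\<forall>c\<in>P. c \<noteq> 0) \<and>
       (\<forall>w\<in>E. (\<forall>c\<in>P. (\<Sum>i\<in>UNIV. c $ i * (w $ i)^2) \<noteq> 0) \<longrightarrow>
          (\<exists>e>0. \<forall>w'\<in>E. dist w' w < e \<longrightarrow>
              abc_loss X theta sx sy N n k w' = abc_loss X theta sx sy N n k w))"
  proof (intro exI[of _ P] conjI ballI impI)
    show "finite P" unfolding P_def by auto
    show "c \<noteq> 0" if "c \<in> P" for c using that unfolding P_def by auto
  next
    fix w assume wE: "w \<in> E" and H: "\<forall>c\<in>P. (\<Sum>i\<in>UNIV. c $ i * (w $ i)^2) \<noteq> 0"
    have ev: "eventually (\<lambda>w'. (g i w' \<le> g j w') = (g i w \<le> g j w)) (at w)"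
      if ij: "i \<in> {0..<N}" "j \<in> {0..<N}" for i j
    proof (cases "cv i j = 0")
      case True
      then have "g i w' - g j w' = 0" for w' using gd[of i w' j] by simp
      then have "(g i w' \<le> g j w') = (g i w \<le> g j w)" for w'
        using \<open>\<And>w'. g i w' - g j w' = 0\<close>[of w] \<open>\<And>w'. g i w' - g j w' = 0\<close>[of w'] by linarith
      then show ?thesis by simp
    next
      case False
      then have "cv i j \<in> P" unfolding P_def using ij by force
      with H have nz: "g i w - g j w \<noteq> 0" using gd by simp
      have tl: "((\<lambda>w'. g i w' - g j w') \<longlongrightarrow> g i w - g j w) (at w)"
        unfolding gd by (intro tendsto_intros)
      show ?thesis
      proof (cases "g i w - g j w > 0")
        case True
        from order_tendstoD(1)[OF tl True] show ?thesis
          by eventually_elim (use True in auto)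
      next
        case False
        with nz have "g i w - g j w < 0" by simp
        from order_tendstoD(2)[OF tl this] show ?thesis
          by eventually_elim (use \<open>g i w - g j w < 0\<close> in auto)
      qed
    qed
    have "eventually (\<lambda>w'. \<forall>i\<in>{0..<N}. \<forall>j\<in>{0..<N}. (g i w' \<le> g j w') = (g i w \<le> g j w)) (at w)"
      using ev by (simp add: eventually_ball_finite)
    then obtain e where e: "e > 0" and he: "\<And>w'. w' \<noteq> w \<Longrightarrow> dist w' w < e \<Longrightarrow>
        \<forall>i\<in>{0..<N}. \<forall>j\<in>{0..<N}. (g i w' \<le> g j w') = (g i w \<le> g j w)"
      unfolding eventually_at by blast
    show "\<exists>e>0. \<forall>w'\<in>E. dist w' w < e \<longrightarrow>
              abc_loss X theta sx sy N n k w' = abc_loss X theta sx sy N n k w"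
    proof (intro exI[of _ e] conjI ballI impI e)
      fix w' assume "w' \<in> E" "dist w' w < e"
      show "abc_loss X theta sx sy N n k w' = abc_loss X theta sx sy N n k w"
      proof (cases "w' = w")
        case True then show ?thesis by simp
      next
        case False
        with he \<open>dist w' w < e\<close> have A: "\<forall>i\<in>{0..<N}. \<forall>j\<in>{0..<N}. (g i w' \<le> g j w') = (g i w \<le> g j w)"
          by blast
        have "sort_key (\<lambda>i. wdist w' (sx i) sy) [0..<N] = sort_key (\<lambda>i. wdist w (sx i) sy) [0..<N]"
          by (rule sort_key_cong) (use A in \<open>simp add: g_def\<close>)
        then show ?thesis unfolding L abc_selected_def by simp
      qed
    qed
  qed
qed

end
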